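(* Let $K\ge 1$, $N\ge 2$, and let ${\bm{p}}\in\Delta_K$ with $p_1\ge p_2\ge\dots\ge p_K$. For ${\bm{q}}\in\Delta_K$ let $L_N({\bm{p}},{\bm{q}})=\sum_{k=1}^K p_k(1-q_k)^N$ (the expected test loss of the memorization model, where the error on component $k$ is $e_k(n_k)=\mathbf{1}_{\{n_k=0\}}$ and ${\bm{n}}\sim\mathrm{Multinomial}(N,{\bm{q}})$). Then $$L^{\mathrm{same}}({\bm{p}}):=L_N({\bm{p}},{\bm{p}})=\sum_{k=1}^K p_k(1-p_k)^N,$$ $$L^*({\bm{p}}):=\min_{{\bm{q}}\in\Delta_K}L_N({\bm{p}},{\bm{q}})=(K_N({\bm{p}})-1)\,\delta_N({\bm{p}})+\sum_{k=K_N({\bm{p}})+1}^K p_k,$$ for some $\delta_N({\bm{p}})\in\big[p_{K_N({\bm{p}})+1},\,p_{K_N({\bm{p}})}\big)$ (with the convention $p_{K+1}=0$), where $$K_N({\bm{p}}):=\max\left\{s\le K:\ \sum_{k=1}^{s-1}\left(1-(p_s/p_k)^{\frac{1}{N-1}}\right)<1\right\}.$$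
   Context: $\Delta_K=\{{\bm{r}}\in\mathbb{R}^K:{\bm{r}}\ge0,\ \sum_k r_k=1\}$. Memorization model: each of $K$ tasks is memorizing a unique atom; the test distribution is the mixture of the tasks with proportions ${\bm{p}}$, training uses $N$ i.i.d. samples from the mixture with proportions ${\bm{q}}$, and the error on task $k$ is $1$ if no training example from task $k$ was seen and $0$ otherwise. *)

theory Defs
  imports Complex_Main
begin

text \<open>Vectors in the probability simplex are functions nat => real, indexed by 1..K
  (values outside 1..K are irrelevant).\<close>

definition simplex :: "nat \<Rightarrow> (nat \<Rightarrow> real) set" where
  "simplex K = {r. (\<forall>k\<in>{1..K}. 0 \<le> r k) \<and> (\<Sum>k=1..K. r k) = 1}"

definition LN :: "nat \<Rightarrow> nat \<Rightarrow> (nat \<Rightarrow> real) \<Rightarrow> (nat \<Rightarrow> real) \<Rightarrow> real" where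
  "LN N K p q = (\<Sum>k=1..K. p k * (1 - q k) ^ N)"

definition KN :: "nat \<Rightarrow> nat \<Rightarrow> (nat \<Rightarrow> real) \<Rightarrow> nat" where
  "KN N K p = Max {s \<in> {1..K}.
      (\<Sum>k=1..s-1. 1 - (p s / p k) powr (1 / (real N - 1))) < 1}"

definition pext :: "nat \<Rightarrow> (nat \<Rightarrow> real) \<Rightarrow> nat \<Rightarrow> real" where
  "pext K p j = (if j \<le> K then p j else 0)"

end

theory Submission
  imports Defs
begin

lemma tangent_pow:
  fixes y a :: real
  assumes "0 \<le> y" "0 \<le> a" "n \<ge> 1"
  shows "a ^ n + real n * a ^ (n - 1) * (y - a) \<le> y ^ n"
  using assms(3)
proof (induction n rule: dec_induct)
  case base
  then show ?case by simp
next
  case (step n)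
  have IH: "a ^ n + real n * a ^ (n - 1) * (y - a) \<le> y ^ n" by fact
  have "y * (a ^ n + real n * a ^ (n - 1) * (y - a)) \<le> y * y ^ n"
    using IH assms(1) by (rule mult_left_mono)
  moreover have "y * (a ^ n + real n * a ^ (n - 1) * (y - a))
      = a ^ Suc n + real (Suc n) * a ^ n * (y - a) + real n * a ^ (n - 1) * (y - a)^2"
  proof -
    obtain m where n: "n = Suc m" using step(1) by (cases n) auto
    show ?thesis unfolding n by (simp add: algebra_simps power2_eq_square)
  qed
  moreover have "0 \<le> real n * a ^ (n - 1) * (y - a)^2"
    using assms(2) by simp
  ultimately show ?case by simp
qed

lemma sum_split_ivl:
  fixes f :: "nat \<Rightarrow> real"
  assumes "s \<le> K"
  shows "sum f {1..K} = sum f {1..s} + sum f {s+1..K}"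
proof -
  have "{1..K} = {1..s} \<union> {s+1..K}" using assms by auto
  moreover have "{1..s} \<inter> {s+1..K} = {}" by auto
  ultimately show ?thesis by (simp add: sum.union_disjoint)
qed

theorem theorem4p2:
  fixes K N :: nat and p :: "nat \<Rightarrow> real"
  assumes "K \<ge> 1" and "N \<ge> 2"
    and "p \<in> simplex K"
    and "\<And>i j. 1 \<le> i \<Longrightarrow> i \<le> j \<Longrightarrow> j \<le> K \<Longrightarrow> p j \<le> p i"
  shows "LN N K p p = (\<Sum>k=1..K. p k * (1 - p k) ^ N)
    \<and> (\<exists>\<delta>. pext K p (KN N K p + 1) \<le> \<delta> \<and> \<delta> < p (KN N K p)
        \<and> (\<exists>q\<in>simplex K. LN N K p q =
              (real (KN N K p) - 1) * \<delta> + (\<Sum>k=KN N K p + 1..K. p k))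
        \<and> (\<forall>q\<in>simplex K.
              (real (KN N K p) - 1) * \<delta> + (\<Sum>k=KN N K p + 1..K. p k) \<le> LN N K p q))"
proof -
  have p0: "\<And>k. k \<in> {1..K} \<Longrightarrow> 0 \<le> p k" and psum: "(\<Sum>k=1..K. p k) = 1"
    using assms(3) unfolding simplex_def by auto
  note mono = assms(4)
  define m where "m = N - 1"
  have m0: "0 < m" using assms(2) unfolding m_def by simp
  have Nm: "N = Suc m" using assms(2) unfolding m_def by simp
  have rm: "real N - 1 = real m" using Nm by simp
  have pr: "x powr (1 / (real N - 1)) = root m x" if "0 \<le> x" for x
    using root_powr_inverse[OF m0 that] rm by simp
  define S where "S = {s \<in> {1..K}. (\<Sum>k=1..s-1. 1 - (p s / p k) powr (1 / (real N - 1))) < 1}"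
  define s where "s = KN N K p"
  have sdef: "s = Max S" unfolding s_def KN_def S_def by simp
  have finS: "finite S" unfolding S_def by simp
  have "1 \<in> S" unfolding S_def using assms(1) by simp
  hence sS: "s \<in> S" using finS sdef Max_in by blast
  hence s1: "1 \<le> s" and sK: "s \<le> K" unfolding S_def by auto
  have notS: "s + 1 \<notin> S"
  proof
    assume "s + 1 \<in> S"
    hence "s + 1 \<le> s" using Max_ge[OF finS] sdef by simp
    thus False by simp
  qed
  have p1: "0 < p 1"
  proof (rule ccontr)
    assume "\<not> 0 < p 1"
    hence "p k \<le> 0" if "k \<in> {1..K}" for k using mono[of 1 k] that by auto
    hence "(\<Sum>k=1..K. p k) \<le> 0" by (meson sum_nonpos)
    thus False using psum by simp
  qed
  have ps: "0 < p s"
  proof (rule ccontr)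
    assume a: "\<not> 0 < p s"
    hence "p s = 0" using p0[of s] s1 sK by auto
    hence "s \<noteq> 1" using p1 by auto
    with s1 have s2: "s \<ge> 2" by simp
    have "(\<Sum>k=1..s-1. 1 - (p s / p k) powr (1 / (real N - 1))) = (\<Sum>k=1..s-1. 1)"
      using \<open>p s = 0\<close> by simp
    also have "\<dots> = real (s - 1)" by simp
    finally have "(\<Sum>k=1..s-1. 1 - (p s / p k) powr (1 / (real N - 1))) \<ge> 1" using s2 by simp
    thus False using sS unfolding S_def by simp
  qed
  have pk: "p s \<le> p k" if "k \<in> {1..s}" for k using mono that sK by auto
  have pkpos: "0 < p k" if "k \<in> {1..s}" for k using pk[OF that] ps by linarith
  define h where "h = (\<lambda>\<mu>. \<Sum>k=1..s. 1 - root m (\<mu> / p k))"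
  have hcont: "continuous_on A h" for A unfolding h_def
    by (intro continuous_intros) (use pkpos in force)
  have hps: "h (p s) < 1"
  proof -
    have "h (p s) = (\<Sum>k=1..s-1. 1 - root m (p s / p k)) + (1 - root m (p s / p s))"
    proof -
      obtain t where t: "s = Suc t" using s1 by (cases s) auto
      show ?thesis unfolding h_def t by (simp add: sum.cl_ivl_Suc)
    qed
    also have "\<dots> = (\<Sum>k=1..s-1. 1 - (p s / p k) powr (1 / (real N - 1)))"
      using ps m0 by (auto intro!: sum.cong simp: pr pkpos less_imp_le)
    finally show ?thesis using sS unfolding S_def by simp
  qed
  define lo where "lo = pext K p (s + 1)"
  have lo0: "0 \<le> lo" unfolding lo_def pext_def using p0 by auto
  have lops: "lo \<le> p s" unfolding lo_def pext_def using mono ps s1 by auto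
  have hlo: "1 \<le> h lo"
  proof (cases "s < K")
    case True
    hence lo: "lo = p (s + 1)" unfolding lo_def pext_def by simp
    have "\<not> (\<Sum>k=1..s. 1 - (p (s+1) / p k) powr (1 / (real N - 1))) < 1"
      using notS True unfolding S_def by auto
    moreover have "(\<Sum>k=1..s. 1 - (p (s+1) / p k) powr (1 / (real N - 1))) = h lo"
      unfolding h_def lo using lo lo0 pkpos by (auto intro!: sum.cong simp: pr less_imp_le)
    ultimately show ?thesis by simp
  next
    case False
    hence "lo = 0" unfolding lo_def pext_def by simp
    hence "h lo = real s" unfolding h_def by simp
    thus ?thesis using s1 by simp
  qed
  obtain \<delta> where d: "lo \<le> \<delta>" "\<delta> \<le> p s" "h \<delta> = 1"
    using IVT2'[of h "p s" 1 lo, OF _ hlo lops hcont] hps by auto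
  have dlt: "\<delta> < p s" using d hps by (cases "\<delta> = p s") auto
  have d0: "0 \<le> \<delta>" using d lo0 by simp
  define a where "a = (\<lambda>k. root m (\<delta> / p k))"
  have a0: "0 \<le> a k" if "k \<in> {1..s}" for k
    unfolding a_def using d0 pkpos[OF that] by (simp add: real_root_ge_zero)
  have am: "p k * a k ^ m = \<delta>" if "k \<in> {1..s}" for k
    unfolding a_def using d0 pkpos[OF that] m0 by simp
  have a1: "a k \<le> 1" if "k \<in> {1..s}" for k
  proof -
    have "\<delta> / p k \<le> 1" using pkpos[OF that] pk[OF that] dlt by simp
    thus ?thesis unfolding a_def using m0 real_root_le_mono[of m _ 1] by fastforce
  qed
  have aN: "p k * a k ^ N = \<delta> * a k" if "k \<in> {1..s}" for k
    using am[OF that] unfolding Nm by (simp add: algebra_simps)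
  have suma: "(\<Sum>k=1..s. a k) = real s - 1"
  proof -
    have "h \<delta> = (\<Sum>k=1..s. 1 - a k)" unfolding h_def a_def by simp
    also have "\<dots> = real s - (\<Sum>k=1..s. a k)" by (simp add: sum_subtractf)
    finally show ?thesis using d by simp
  qed
  define qs where "qs = (\<lambda>k. if k \<le> s then 1 - a k else 0)"
  have qs_s: "(\<Sum>k=1..K. qs k) = 1"
  proof -
    have "(\<Sum>k=1..K. qs k) = (\<Sum>k=1..s. qs k) + (\<Sum>k=s+1..K. qs k)"
      using sum_split_ivl[OF sK] .
    also have "(\<Sum>k=s+1..K. qs k) = 0" unfolding qs_def by simp
    also have "(\<Sum>k=1..s. qs k) = h \<delta>" unfolding qs_def h_def a_def by simp
    finally show ?thesis using d by simp
  qed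
  have qsS: "qs \<in> simplex K"
    unfolding simplex_def using qs_s a1 by (auto simp: qs_def)
  have LNqs: "LN N K p qs = (real s - 1) * \<delta> + (\<Sum>k=s+1..K. p k)"
  proof -
    have "LN N K p qs = (\<Sum>k=1..s. p k * (1 - qs k) ^ N) + (\<Sum>k=s+1..K. p k * (1 - qs k) ^ N)"
      unfolding LN_def using sum_split_ivl[OF sK] .
    also have "(\<Sum>k=1..s. p k * (1 - qs k) ^ N) = (\<Sum>k=1..s. \<delta> * a k)"
      by (rule sum.cong) (auto simp: qs_def aN)
    also have "\<dots> = \<delta> * (real s - 1)" by (simp only: sum_distrib_left[symmetric] suma)
    also have "(\<Sum>k=s+1..K. p k * (1 - qs k) ^ N) = (\<Sum>k=s+1..K. p k)"
      by (rule sum.cong) (auto simp: qs_def)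
    finally show ?thesis by (simp add: mult.commute)
  qed
  have lower: "LN N K p qs \<le> LN N K p q" if qS: "q \<in> simplex K" for q
  proof -
    have q0: "\<And>k. k \<in> {1..K} \<Longrightarrow> 0 \<le> q k" and qsum: "(\<Sum>k=1..K. q k) = 1"
      using qS unfolding simplex_def by auto
    have q1: "q k \<le> 1" if "k \<in> {1..K}" for k
    proof -
      have "q k \<le> (\<Sum>k=1..K. q k)" using member_le_sum[of k "{1..K}" q] q0 that by auto
      thus ?thesis using qsum by simp
    qed
    have T: "p k * (1 - qs k) ^ N + real N * \<delta> * (qs k - q k) \<le> p k * (1 - q k) ^ N"
      if k: "k \<in> {1..K}" for k
    proof (cases "k \<le> s")
      case True
      hence ks: "k \<in> {1..s}" using k by auto
      have "a k ^ N + real N * a k ^ (N - 1) * ((1 - q k) - a k) \<le> (1 - q k) ^ N"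
        using tangent_pow[of "1 - q k" "a k" N] q1[OF k] a0[OF ks] assms(2) by simp
      hence "p k * (a k ^ N + real N * a k ^ (N - 1) * ((1 - q k) - a k)) \<le> p k * (1 - q k) ^ N"
        using pkpos[OF ks] by (simp add: mult_left_mono)
      moreover have "p k * (a k ^ N + real N * a k ^ (N - 1) * ((1 - q k) - a k))
          = p k * (1 - qs k) ^ N + real N * (p k * a k ^ m) * (qs k - q k)"
        using True by (simp add: qs_def algebra_simps m_def)
      ultimately show ?thesis using am[OF ks] by simp
    next
      case False
      hence sK': "s < K" using k by auto
      have lo: "lo = p (s + 1)" unfolding lo_def pext_def using sK' by simp
      have "p k \<le> p (s+1)" using mono False k by auto
      hence pkd: "p k \<le> \<delta>" using lo d by simp
      have "1 ^ N + real N * 1 ^ (N - 1) * ((1 - q k) - 1) \<le> (1 - q k) ^ N"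
        using tangent_pow[of "1 - q k" 1 N] q1[OF k] assms(2) by simp
      hence "p k * (1 - real N * q k) \<le> p k * (1 - q k) ^ N"
        using p0[OF k] by (simp add: mult_left_mono)
      moreover have "real N * p k * q k \<le> real N * \<delta> * q k"
        using pkd q0[OF k] by (intro mult_right_mono mult_left_mono) auto
      ultimately show ?thesis using False by (simp add: qs_def algebra_simps)
    qed
    have "(\<Sum>k=1..K. p k * (1 - qs k) ^ N + real N * \<delta> * (qs k - q k)) \<le> LN N K p q"
      unfolding LN_def by (rule sum_mono) (rule T)
    moreover have "(\<Sum>k=1..K. p k * (1 - qs k) ^ N + real N * \<delta> * (qs k - q k))
        = LN N K p qs + real N * \<delta> * ((\<Sum>k=1..K. qs k) - (\<Sum>k=1..K. q k))"
      unfolding LN_def by (simp add: sum.distrib sum_distrib_left[symmetric] sum_subtractf)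
    ultimately show ?thesis using qs_s qsum by simp
  qed
  have lod: "pext K p (s + 1) \<le> \<delta>" using d(1) unfolding lo_def .
  have "\<exists>\<delta>. pext K p (s + 1) \<le> \<delta> \<and> \<delta> < p s
        \<and> (\<exists>q\<in>simplex K. LN N K p q = (real s - 1) * \<delta> + (\<Sum>k=s + 1..K. p k))
        \<and> (\<forall>q\<in>simplex K. (real s - 1) * \<delta> + (\<Sum>k=s + 1..K. p k) \<le> LN N K p q)"
    using lod dlt qsS LNqs lower by metis
  moreover have "LN N K p p = (\<Sum>k=1..K. p k * (1 - p k) ^ N)" unfolding LN_def ..
  ultimately show ?thesis unfolding s_def by blast
qed

end
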